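(* Let $K=\operatorname{cone}\{e_1,\dots,e_m\}\subset\mathbb{R}^m$ be a simplicial cone which is an isotone projection cone. Then for every $\varepsilon\in\mathcal{E}$, $K_\varepsilon$ is a $K$-isotone projection set.
   Context: $\mathbb{R}^m$ carries the standard inner product. A simplicial cone is $\operatorname{cone}\{e_1,\dots,e_m\}=\{\sum t^ie_i:t^i\ge0\}$ with $e_1,\dots,e_m$ linearly independent. $\mathcal{E}=\{\varepsilon\in\mathbb{R}^m:|\varepsilon^i|=1,\ i=1,\dots,m\}$ and $K_\varepsilon=\operatorname{cone}\{\varepsilon^1e_1,\dots,\varepsilon^me_m\}$. $x\le_K y$ means $y-x\in K$. A closed convex set $D$ is a $K$-isotone projection set if $x\le_K y$ implies $P_Dx\le_K P_Dy$, where $P_D$ is the metric projection onto $D$. A proper cone $K$ is an isotone projection cone if $K$ itself is a $K$-isotone projection set. *)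

theory Defs
  imports "HOL-Analysis.Analysis"
begin

definition simplicial_cone :: "('m::finite \<Rightarrow> real^'m) \<Rightarrow> (real^'m) set" where
  "simplicial_cone e = {(\<Sum>i\<in>UNIV. t i *\<^sub>R e i) | t. \<forall>i. t i \<ge> 0}"

definition lin_indep_family :: "('m::finite \<Rightarrow> real^'m) \<Rightarrow> bool" where
  "lin_indep_family e \<longleftrightarrow> inj e \<and> independent (range e)"

definition cone_le :: "(real^'m) set \<Rightarrow> real^'m \<Rightarrow> real^'m \<Rightarrow> bool" where
  "cone_le K x y \<longleftrightarrow> y - x \<in> K"

definition isotone_projection_set :: "(real^'m) set \<Rightarrow> (real^'m) set \<Rightarrow> bool" where
  "isotone_projection_set K D \<longleftrightarrow> closed D \<and> convex D \<and> D \<noteq> {} \<and>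
     (\<forall>x y. cone_le K x y \<longrightarrow> cone_le K (closest_point D x) (closest_point D y))"

definition proper_cone :: "(real^'m) set \<Rightarrow> bool" where
  "proper_cone K \<longleftrightarrow> closed K \<and> convex K \<and> cone K \<and> K \<inter> uminus ` K = {0}
     \<and> interior K \<noteq> {}"

definition isotone_projection_cone :: "(real^'m) set \<Rightarrow> bool" where
  "isotone_projection_cone K \<longleftrightarrow> proper_cone K \<and> isotone_projection_set K K"

definition sign_vectors :: "('m \<Rightarrow> real) set" where
  "sign_vectors = {\<epsilon>. \<forall>i. \<bar>\<epsilon> i\<bar> = 1}"

end

theory Submission
  imports Defs
begin

lemma indep_sum_zero:
  fixes e :: "'m::finite \<Rightarrow> real^'m"
  assumes "lin_indep_family e" "(\<Sum>i\<in>UNIV. c i *\<^sub>R e i) = 0"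
  shows "c i = 0"
proof -
  have inj: "inj e" and ind: "independent (range e)" using assms(1) unfolding lin_indep_family_def by auto
  define d where "d v = c (inv e v)" for v
  have "(\<Sum>v\<in>range e. d v *\<^sub>R v) = (\<Sum>i\<in>UNIV. d (e i) *\<^sub>R e i)"
    by (simp add: sum.reindex[OF inj])
  also have "\<dots> = 0" using assms(2) inj by (simp add: d_def)
  finally have z: "(\<Sum>v\<in>range e. d v *\<^sub>R v) = 0" .
  have "\<forall>v\<in>range e. d v = 0"
    using ind[unfolded independent_explicit_module, rule_format, OF _ order_refl z] by simp
  then show ?thesis using inj by (auto simp: d_def)
qed

lemma dual_basis:
  fixes e :: "'m::finite \<Rightarrow> real^'m"
  assumes "lin_indep_family e"
  obtains u where "\<And>i j. e i \<bullet> u j = (if i = j then 1 else 0)"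
    "\<And>v. v = (\<Sum>j\<in>UNIV. (u j \<bullet> v) *\<^sub>R e j)"
    "\<And>v. v = (\<Sum>j\<in>UNIV. (e j \<bullet> v) *\<^sub>R u j)"
proof -
  define A :: "real^'m^'m" where "A = (\<chi> i. e i)"
  have "\<exists>B::real^'m^'m. A ** B = mat 1"
    unfolding matrix_right_invertible_independent_rows
  proof (intro allI impI)
    fix c :: "'m \<Rightarrow> real" and i assume "(\<Sum>i\<in>UNIV. c i *s row i A) = 0"
    then have "(\<Sum>i\<in>UNIV. c i *\<^sub>R e i) = 0" by (simp add: A_def row_def scalar_mult_eq_scaleR vec_lambda_eta)
    then show "c i = 0" using indep_sum_zero[OF assms] by blast
  qed
  then obtain B :: "real^'m^'m" where AB: "A ** B = mat 1" by blast
  then have BA: "B ** A = mat 1" using matrix_left_right_inverse by blast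
  define u where "u j = column j B" for j
  show ?thesis
  proof
    fix i j
    have "e i \<bullet> u j = (A ** B) $ i $ j"
      by (simp add: inner_vec_def u_def column_def A_def matrix_matrix_mult_def)
    then show "e i \<bullet> u j = (if i = j then 1 else 0)" by (simp add: AB mat_def)
  next
    fix v :: "real^'m"
    show "v = (\<Sum>j\<in>UNIV. (u j \<bullet> v) *\<^sub>R e j)"
    proof (rule vec_eq_iff[THEN iffD2], rule allI)
      fix k
      have "(\<Sum>j\<in>UNIV. (u j \<bullet> v) *\<^sub>R e j) $ k = (\<Sum>j\<in>UNIV. (\<Sum>l\<in>UNIV. B$l$j * v$l) * A$j$k)"
        by (simp add: inner_vec_def u_def column_def A_def sum_component mult.commute)
      also have "\<dots> = (\<Sum>j\<in>UNIV. \<Sum>l\<in>UNIV. B$l$j * v$l * A$j$k)"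
        by (simp add: sum_distrib_right)
      also have "\<dots> = (\<Sum>l\<in>UNIV. \<Sum>j\<in>UNIV. B$l$j * v$l * A$j$k)"
        by (rule sum.swap)
      also have "\<dots> = (\<Sum>l\<in>UNIV. v$l * (B ** A)$l$k)"
        by (simp add: matrix_matrix_mult_def sum_distrib_left mult_ac)
      also have "\<dots> = v $ k" by (simp add: BA mat_def if_distrib sum.delta sum.delta' cong: if_cong)
      finally show "v $ k = (\<Sum>j\<in>UNIV. (u j \<bullet> v) *\<^sub>R e j) $ k" by simp
    qed
  next
    fix v :: "real^'m"
    show "v = (\<Sum>j\<in>UNIV. (e j \<bullet> v) *\<^sub>R u j)"
    proof (rule vec_eq_iff[THEN iffD2], rule allI)
      fix k
      have "(\<Sum>j\<in>UNIV. (e j \<bullet> v) *\<^sub>R u j) $ k = (\<Sum>j\<in>UNIV. (\<Sum>l\<in>UNIV. A$j$l * v$l) * B$k$j)"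
        by (simp add: inner_vec_def u_def column_def A_def sum_component)
      also have "\<dots> = (\<Sum>j\<in>UNIV. \<Sum>l\<in>UNIV. A$j$l * v$l * B$k$j)"
        by (simp add: sum_distrib_right)
      also have "\<dots> = (\<Sum>l\<in>UNIV. \<Sum>j\<in>UNIV. A$j$l * v$l * B$k$j)"
        by (rule sum.swap)
      also have "\<dots> = (\<Sum>l\<in>UNIV. (B ** A)$k$l * v$l)"
        by (simp add: matrix_matrix_mult_def sum_distrib_left mult_ac)
      also have "\<dots> = v $ k" by (simp add: BA mat_def if_distrib[of "\<lambda>a. a * _"] sum.delta sum.delta' cong: if_cong)
      finally show "v $ k = (\<Sum>j\<in>UNIV. (e j \<bullet> v) *\<^sub>R u j) $ k" by simp
    qed
  qed
qed

lemma inner_sum_e: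
  fixes e u :: "'m::finite \<Rightarrow> real^'m"
  assumes dual: "\<And>i j. e i \<bullet> u j = (if i = j then 1 else 0)"
  shows "u j \<bullet> (\<Sum>i\<in>UNIV. t i *\<^sub>R e i) = t j"
proof -
  have "u j \<bullet> (\<Sum>i\<in>UNIV. t i *\<^sub>R e i) = (\<Sum>i\<in>UNIV. t i * (e i \<bullet> u j))"
    by (simp add: inner_sum_right inner_commute)
  also have "\<dots> = t j" by (simp add: dual if_distrib[of "\<lambda>a. _ * a"] cong: if_cong)
  finally show ?thesis .
qed

lemma cone_char:
  fixes e u :: "'m::finite \<Rightarrow> real^'m"
  assumes dual: "\<And>i j. e i \<bullet> u j = (if i = j then 1 else 0)"
    and E1: "\<And>v. v = (\<Sum>j\<in>UNIV. (u j \<bullet> v) *\<^sub>R e j)"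
    and s: "\<And>i. \<bar>s i\<bar> = 1"
  shows "simplicial_cone (\<lambda>i. s i *\<^sub>R e i) = {v. \<forall>i. 0 \<le> s i * (u i \<bullet> v)}"
proof -
  have ss: "s i * s i = 1" for i using s[of i] by (metis abs_mult_self_eq mult_1_left)
  show ?thesis
  proof (intro set_eqI iffI)
    fix v assume "v \<in> simplicial_cone (\<lambda>i. s i *\<^sub>R e i)"
    then obtain t where t: "\<forall>i. t i \<ge> 0" and v: "v = (\<Sum>i\<in>UNIV. t i *\<^sub>R s i *\<^sub>R e i)"
      unfolding simplicial_cone_def by blast
    have "v = (\<Sum>i\<in>UNIV. (t i * s i) *\<^sub>R e i)" using v by simp
    then have "u i \<bullet> v = t i * s i" for i using inner_sum_e[OF dual] by metis
    then have "s i * (u i \<bullet> v) = t i * (s i * s i)" for i by (simp add: mult_ac)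
    then show "v \<in> {v. \<forall>i. 0 \<le> s i * (u i \<bullet> v)}" using t ss by simp
  next
    fix v assume "v \<in> {v. \<forall>i. 0 \<le> s i * (u i \<bullet> v)}"
    then have nn: "\<forall>i. 0 \<le> s i * (u i \<bullet> v)" by simp
    have "(\<Sum>i\<in>UNIV. (s i * (u i \<bullet> v)) *\<^sub>R s i *\<^sub>R e i) = (\<Sum>i\<in>UNIV. (u i \<bullet> v) *\<^sub>R e i)"
      by (rule sum.cong) (auto simp: ss mult_ac)
    also have "\<dots> = v" using E1[of v] by simp
    finally show "v \<in> simplicial_cone (\<lambda>i. s i *\<^sub>R e i)"
      unfolding simplicial_cone_def using nn
      by (intro CollectI exI[of _ "\<lambda>i. s i * (u i \<bullet> v)"]) auto
  qed
qed

lemma halfspaces_closed_convex: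
  fixes u :: "'m::finite \<Rightarrow> real^'m"
  shows "closed {v. \<forall>i. 0 \<le> s i * (u i \<bullet> v)}" "convex {v. \<forall>i. 0 \<le> s i * (u i \<bullet> v)}"
proof -
  have eq: "{v. \<forall>i. 0 \<le> s i * (u i \<bullet> v)} = (\<Inter>i\<in>UNIV. {v. inner (s i *\<^sub>R u i) v \<ge> 0})"
    by auto
  show "closed {v. \<forall>i. 0 \<le> s i * (u i \<bullet> v)}" unfolding eq
    by (intro closed_INT ballI closed_halfspace_ge)
  show "convex {v. \<forall>i. 0 \<le> s i * (u i \<bullet> v)}" unfolding eq
    by (intro convex_INT convex_halfspace_ge)
qed

lemma var_closest:
  fixes a p :: "real^'m"
  assumes "p \<in> S" "\<forall>z\<in>S. (a - p) \<bullet> (z - p) \<le> 0" "convex S" "closed S"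
  shows "closest_point S a = p"
proof -
  have "dist a p \<le> dist a z" if "z \<in> S" for z
  proof -
    have h: "(a - p) \<bullet> (z - p) \<le> 0" using assms(2) that by blast
    have "(a - z) \<bullet> (a - z) = (a - p) \<bullet> (a - p) - 2 * ((a - p) \<bullet> (z - p)) + (z - p) \<bullet> (z - p)"
      by (simp add: inner_diff_left inner_diff_right inner_commute algebra_simps)
    moreover have "0 \<le> (z - p) \<bullet> (z - p)" by simp
    ultimately have "(a - p) \<bullet> (a - p) \<le> (a - z) \<bullet> (a - z)" using h by linarith
    then show ?thesis unfolding dist_norm
      by (simp add: norm_le)
  qed
  then show ?thesis using closest_point_unique[OF assms(3,4,1)] by metis
qed


lemma H_nonpos:
  fixes e u :: "'m::finite \<Rightarrow> real^'m"
  assumes dual: "\<And>i j. e i \<bullet> u j = (if i = j then 1 else 0)"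
    and iso: "\<And>x y. cone_le {v. \<forall>i. 0 \<le> u i \<bullet> v} x y \<Longrightarrow>
        cone_le {v. \<forall>i. 0 \<le> u i \<bullet> v} (closest_point {v. \<forall>i. 0 \<le> u i \<bullet> v} x)
                 (closest_point {v. \<forall>i. 0 \<le> u i \<bullet> v} y)"
    and ij: "i \<noteq> j"
  shows "u i \<bullet> u j \<le> 0"
proof -
  define K where "K = {v. \<forall>i. 0 \<le> u i \<bullet> v}"
  have cK: "closed K" "convex K" unfolding K_def
    using halfspaces_closed_convex[of "\<lambda>_. 1" u] by simp_all
  define M where "M = 1 + (\<Sum>k\<in>UNIV. \<bar>u k \<bullet> u j\<bar>)"
  have Mb: "\<bar>u k \<bullet> u j\<bar> \<le> M" for k
  proof -
    have "\<bar>u k \<bullet> u j\<bar> \<le> (\<Sum>k\<in>UNIV. \<bar>u k \<bullet> u j\<bar>)"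
      by (rule member_le_sum) auto
    then show ?thesis unfolding M_def by simp
  qed
  define p where "p = (\<Sum>k\<in>UNIV. (if k = j then 0 else M) *\<^sub>R e k)"
  have up: "u k \<bullet> p = (if k = j then 0 else M)" for k
    unfolding p_def by (rule inner_sum_e[OF dual])
  have ue: "u k \<bullet> e l = (if l = k then 1 else 0)" for k l
    using dual[of l k] by (simp add: inner_commute)
  define x where "x = p - u j"
  define y where "y = p + (u j \<bullet> u j) *\<^sub>R e j - u j"
  have pK: "p \<in> K" unfolding K_def using up Mb[of j]
    by (auto simp: up) (smt (verit) Mb)
  have Px: "closest_point K x = p"
  proof (rule var_closest[OF pK _ cK(2,1)])
    show "\<forall>z\<in>K. (x - p) \<bullet> (z - p) \<le> 0"
      unfolding K_def x_def by (auto simp: inner_diff_right up)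
  qed
  have yK: "y \<in> K"
    unfolding K_def y_def
  proof (intro CollectI allI)
    fix k
    show "0 \<le> u k \<bullet> (p + (u j \<bullet> u j) *\<^sub>R e j - u j)"
      using Mb[of k] by (cases "k = j") (auto simp: inner_diff_right inner_add_right up ue inner_commute[of "u j" "u k"])
  qed
  have Py: "closest_point K y = y" using yK by (rule closest_point_self)
  have "cone_le K x y" unfolding cone_le_def K_def x_def y_def
    by (auto simp: ue)
  then have "cone_le K (closest_point K x) (closest_point K y)"
    using iso unfolding K_def by blast
  then have "y - p \<in> K" unfolding Px Py cone_le_def .
  then have "0 \<le> u i \<bullet> (y - p)" unfolding K_def by blast
  then show ?thesis unfolding y_def using ij by (simp add: inner_diff_right inner_add_right ue)
qed


lemma proj_coords:
  fixes e u :: "'m::finite \<Rightarrow> real^'m"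
  assumes dual: "\<And>i j. e i \<bullet> u j = (if i = j then 1 else 0)"
    and s: "\<And>i. \<bar>s i\<bar> = 1"
  defines "D \<equiv> {v. \<forall>i. 0 \<le> s i * (u i \<bullet> v)}"
  shows "(e i \<bullet> (x - closest_point D x)) * (u i \<bullet> closest_point D x) = 0"
    "s i * (e i \<bullet> (x - closest_point D x)) \<le> 0"
    "0 \<le> s i * (u i \<bullet> closest_point D x)"
proof -
  have ss: "s i * s i = 1" using s[of i] by (metis abs_mult_self_eq mult_1_left)
  have cD: "closed D" "convex D" unfolding D_def using halfspaces_closed_convex by auto
  have "0 \<in> D" unfolding D_def by simp
  then have zD: "closest_point D x \<in> D" using closest_point_in_set[OF cD(1)] by blast
  define z where "z = closest_point D x"
  have ue: "u k \<bullet> e l = (if l = k then 1 else 0)" for k l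
    using dual[of l k] by (simp add: inner_commute)
  have key: "t * (e i \<bullet> (x - z)) \<le> 0" if "0 \<le> s i * (u i \<bullet> z + t)" for t
  proof -
    have "z + t *\<^sub>R e i \<in> D"
      using zD that unfolding D_def z_def by (auto simp: inner_add_right ue)
    from closest_point_dot[OF cD(2,1) this, of x]
    show ?thesis by (simp add: z_def inner_commute)
  qed
  have zi: "0 \<le> s i * (u i \<bullet> z)" using zD unfolding D_def z_def by blast
  then show "0 \<le> s i * (u i \<bullet> closest_point D x)" by (simp add: z_def)
  have a: "(- (u i \<bullet> z)) * (e i \<bullet> (x - z)) \<le> 0" by (rule key) simp
  have b: "(u i \<bullet> z) * (e i \<bullet> (x - z)) \<le> 0"
    by (rule key) (use zi in \<open>simp add: distrib_left\<close>)
  from a b show "(e i \<bullet> (x - closest_point D x)) * (u i \<bullet> closest_point D x) = 0"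
    unfolding z_def[symmetric] by (simp add: mult.commute)
  have "s i * (e i \<bullet> (x - z)) \<le> 0"
    by (rule key) (use zi ss in \<open>simp add: distrib_left\<close>)
  then show "s i * (e i \<bullet> (x - closest_point D x)) \<le> 0" by (simp add: z_def)
qed

lemma mlemma:
  fixes e u :: "'m::finite \<Rightarrow> real^'m"
  assumes dual: "\<And>i j. e i \<bullet> u j = (if i = j then 1 else 0)"
    and E2: "\<And>v. v = (\<Sum>j\<in>UNIV. (e j \<bullet> v) *\<^sub>R u j)"
    and H: "\<And>i j. i \<noteq> j \<Longrightarrow> u i \<bullet> u j \<le> 0"
    and k: "\<And>i. 0 \<le> u i \<bullet> k"
    and c: "\<And>i. (e i \<bullet> (d - k)) * (u i \<bullet> d) \<le> 0"
  shows "0 \<le> u i \<bullet> d"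
proof -
  define c where "c i = e i \<bullet> (d - k)" for i
  define cp where "cp i = max (c i) 0" for i
  define V where "V = (\<Sum>i\<in>UNIV. cp i *\<^sub>R u i)"
  have U: "d - k = (\<Sum>j\<in>UNIV. c j *\<^sub>R u j)" unfolding c_def by (rule E2)
  have eV: "e l \<bullet> V = cp l" for l
    unfolding V_def by (simp add: inner_sum_right dual if_distrib[of "\<lambda>a. _ * a"] cong: if_cong)
  have Vd: "V \<bullet> d \<le> 0"
  proof -
    have "V \<bullet> d = (\<Sum>i\<in>UNIV. cp i * (u i \<bullet> d))" unfolding V_def by (simp add: inner_sum_left)
    also have "\<dots> \<le> 0"
    proof (rule sum_nonpos)
      fix i show "cp i * (u i \<bullet> d) \<le> 0"
        using c[of i] unfolding cp_def c_def
        by (cases "e i \<bullet> (d - k) > 0") (auto simp: mult_le_0_iff)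
    qed
    finally show ?thesis .
  qed
  have Vk: "0 \<le> V \<bullet> k"
  proof -
    have "V \<bullet> k = (\<Sum>i\<in>UNIV. cp i * (u i \<bullet> k))" unfolding V_def by (simp add: inner_sum_left)
    also have "\<dots> \<ge> 0" by (rule sum_nonneg) (simp add: cp_def k)
    finally show ?thesis by simp
  qed
  have VU: "V \<bullet> V \<le> V \<bullet> (d - k)"
  proof -
    have "V \<bullet> V = (\<Sum>i\<in>UNIV. \<Sum>j\<in>UNIV. cp i * cp j * (u i \<bullet> u j))"
      unfolding V_def by (simp add: inner_sum_left inner_sum_right sum_distrib_left mult_ac inner_commute)
    also have "\<dots> \<le> (\<Sum>i\<in>UNIV. \<Sum>j\<in>UNIV. cp i * c j * (u i \<bullet> u j))"
    proof (intro sum_mono)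
      fix i j
      show "cp i * cp j * (u i \<bullet> u j) \<le> cp i * c j * (u i \<bullet> u j)"
      proof (cases "i = j")
        case True then show ?thesis by (simp add: cp_def max_def)
      next
        case False
        have h: "u i \<bullet> u j \<le> 0" using H[OF False] .
        have "0 \<le> cp i" by (simp add: cp_def)
        moreover have "c j \<le> cp j" by (simp add: cp_def)
        ultimately have "cp i * c j \<le> cp i * cp j" by (simp add: mult_left_mono)
        then show ?thesis using h by (simp add: mult_right_mono_neg)
      qed
    qed
    also have "\<dots> = V \<bullet> (d - k)"
      unfolding V_def U by (simp add: inner_sum_left inner_sum_right sum_distrib_left mult_ac) (rule sum.swap)
    finally show ?thesis .
  qed
  have "V \<bullet> V \<le> 0" using VU Vd Vk by (simp add: inner_diff_right)
  then have "V = 0" using inner_ge_zero[of V] inner_eq_zero_iff[of V] by linarith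
  then have cneg: "c l \<le> 0" for l using eV[of l] by (simp add: cp_def)
  show ?thesis
  proof (cases "c i < 0")
    case True then show ?thesis using c[of i] unfolding c_def by (simp add: mult_le_0_iff)
  next
    case False
    then have ci: "c i = 0" using cneg[of i] by simp
    have eq1: "u i \<bullet> d = u i \<bullet> k + u i \<bullet> (d - k)" by (simp add: inner_diff_right)
    have eq2: "u i \<bullet> (d - k) = (\<Sum>j\<in>UNIV. c j * (u i \<bullet> u j))"
      unfolding U by (simp add: inner_sum_right)
    have "(\<Sum>j\<in>UNIV. c j * (u i \<bullet> u j)) \<ge> 0"
    proof (rule sum_nonneg)
      fix j show "0 \<le> c j * (u i \<bullet> u j)"
        using ci cneg[of j] H[of i j] by (cases "i = j") (auto simp: mult_nonpos_nonpos)
    qed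
    then show ?thesis using k[of i] eq1 eq2 by linarith
  qed
qed


theorem proposition4:
  fixes e :: "'m::finite \<Rightarrow> real^'m"
  assumes "lin_indep_family e"
    and "isotone_projection_cone (simplicial_cone e)"
  shows "\<forall>\<epsilon>\<in>sign_vectors.
           isotone_projection_set (simplicial_cone e) (simplicial_cone (\<lambda>i. \<epsilon> i *\<^sub>R e i))"
proof -
  obtain u where dual: "\<And>i j. e i \<bullet> u j = (if i = j then 1 else 0)"
    and E1: "\<And>v. v = (\<Sum>j\<in>UNIV. (u j \<bullet> v) *\<^sub>R e j)"
    and E2: "\<And>v. v = (\<Sum>j\<in>UNIV. (e j \<bullet> v) *\<^sub>R u j)"
    using dual_basis[OF assms(1)] by blast
  have Kc: "simplicial_cone e = {v. \<forall>i. 0 \<le> u i \<bullet> v}"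
    using cone_char[OF dual E1, of "\<lambda>_. 1"] by simp
  have iso: "\<And>x y. cone_le {v. \<forall>i. 0 \<le> u i \<bullet> v} x y \<Longrightarrow>
        cone_le {v. \<forall>i. 0 \<le> u i \<bullet> v} (closest_point {v. \<forall>i. 0 \<le> u i \<bullet> v} x)
                 (closest_point {v. \<forall>i. 0 \<le> u i \<bullet> v} y)"
    using assms(2) unfolding isotone_projection_cone_def isotone_projection_set_def Kc by blast
  have H: "\<And>i j. i \<noteq> j \<Longrightarrow> u i \<bullet> u j \<le> 0"
    using H_nonpos[OF dual iso] by blast
  show ?thesis
  proof
    fix \<epsilon> :: "'m \<Rightarrow> real" assume "\<epsilon> \<in> sign_vectors"
    then have s: "\<And>i. \<bar>\<epsilon> i\<bar> = 1" unfolding sign_vectors_def by blast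
    have ss: "\<epsilon> i * \<epsilon> i = 1" for i using s[of i] by (metis abs_mult_self_eq mult_1_left)
    define D where "D = {v. \<forall>i. 0 \<le> \<epsilon> i * (u i \<bullet> v)}"
    have Dc: "simplicial_cone (\<lambda>i. \<epsilon> i *\<^sub>R e i) = D"
      unfolding D_def by (rule cone_char[OF dual E1 s])
    have cD: "closed D" "convex D" unfolding D_def using halfspaces_closed_convex by auto
    have nD: "D \<noteq> {}" unfolding D_def by (auto intro!: exI[of _ 0])
    have mono: "cone_le {v. \<forall>i. 0 \<le> u i \<bullet> v} (closest_point D x) (closest_point D y)"
      if "cone_le {v. \<forall>i. 0 \<le> u i \<bullet> v} x y" for x y
    proof -
      define z where "z = closest_point D x"
      define w where "w = closest_point D y"
      have k: "0 \<le> u i \<bullet> (y - x)" for i using that unfolding cone_le_def by blast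
      have "0 \<le> u i \<bullet> (w - z)" for i
      proof (rule mlemma[OF dual E2 H k])
        fix i
        have px1: "(e i \<bullet> (x - z)) * (u i \<bullet> z) = 0"
          and px2: "\<epsilon> i * (e i \<bullet> (x - z)) \<le> 0" and px3: "0 \<le> \<epsilon> i * (u i \<bullet> z)"
          using proj_coords[OF dual s, where i=i and x=x] unfolding z_def D_def by auto
        have py1: "(e i \<bullet> (y - w)) * (u i \<bullet> w) = 0"
          and py2: "\<epsilon> i * (e i \<bullet> (y - w)) \<le> 0" and py3: "0 \<le> \<epsilon> i * (u i \<bullet> w)"
          using proj_coords[OF dual s, where i=i and x=y] unfolding w_def D_def by auto
        define g where "g = e i \<bullet> (x - z)"
        define h where "h = e i \<bullet> (y - w)"
        define \<zeta> where "\<zeta> = u i \<bullet> z"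
        define \<omega> where "\<omega> = u i \<bullet> w"
        have "g * \<omega> = (\<epsilon> i * g) * (\<epsilon> i * \<omega>)" using ss[of i] by (simp add: algebra_simps)
        also have "\<dots> \<le> 0" using px2 py3 unfolding g_def \<omega>_def by (rule mult_nonpos_nonneg)
        finally have A: "g * \<omega> \<le> 0" .
        have "h * \<zeta> = (\<epsilon> i * h) * (\<epsilon> i * \<zeta>)" using ss[of i] by (simp add: algebra_simps)
        also have "\<dots> \<le> 0" using py2 px3 unfolding h_def \<zeta>_def by (rule mult_nonpos_nonneg)
        finally have B: "h * \<zeta> \<le> 0" .
        have "w - z - (y - x) = (x - z) - (y - w)" by simp
        then have "e i \<bullet> (w - z - (y - x)) = g - h" unfolding g_def h_def by (simp add: inner_diff_right)
        moreover have "u i \<bullet> (w - z) = \<omega> - \<zeta>" unfolding \<omega>_def \<zeta>_def by (simp add: inner_diff_right)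
        moreover have "(g - h) * (\<omega> - \<zeta>) = g * \<omega> + h * \<zeta> - g * \<zeta> - h * \<omega>" by (simp add: algebra_simps)
        moreover have "g * \<zeta> = 0" "h * \<omega> = 0" using px1 py1 unfolding g_def h_def \<zeta>_def \<omega>_def by auto
        ultimately show "(e i \<bullet> (w - z - (y - x))) * (u i \<bullet> (w - z)) \<le> 0" using A B by simp
      qed
      then show ?thesis unfolding cone_le_def z_def w_def by blast
    qed
    show "isotone_projection_set (simplicial_cone e) (simplicial_cone (\<lambda>i. \<epsilon> i *\<^sub>R e i))"
      unfolding isotone_projection_set_def Dc Kc using cD nD mono by blast
  qed
qed

end
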